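(* Let $g:E^2\times E^2\to\mathbb R$ and let integers $i,\delta_1,\delta_2\ge0$ satisfy $i\le\delta_1$ and $\delta_2\ge\delta_1-i$. Let $(Z_n)_{n\ge0}$ be a stationary Markov chain with transition matrix $Q$, independent of $(X_n,Y_n)_{n\ge0}$, and write $\mathcal X=(X_n)_{n\ge0}$, $\mathcal Y=(Y_n)_{n\ge0}$, $\mathcal Z=(Z_n)_{n\ge0}$ and, for $T\ge1$, $\mathcal Y^T=(Y_{n+T})_{n\ge0}$. Then $$\mathbb E(\mathcal L^g(\mathcal X,\mathcal Y,\mathcal Z))=1,$$ and there is a constant $\rho>0$, not depending on $i,\delta_1,\delta_2,T$, such that $\mathbb E(\mathcal L^g(\mathcal X,\mathcal Y,\mathcal Y^T))\le\rho$ whenever $T\ge1$ and $i+T\ge\delta_1+1$.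
   Context: Let $E$ be a finite set and $P,Q$ irreducible aperiodic stochastic $E\times E$ matrices. Under $\mathbb P$, $(X_n)_{n\ge0}$ and $(Y_n)_{n\ge0}$ are independent stationary Markov chains with transition matrices $P$ and $Q$. For $g:E^2\times E^2\to\mathbb R$ let $\Phi_0(g)_{(x,y),(x',y')}=\exp(g(x,y,x',y'))P_{x,x'}Q_{y,y'}$ with spectral radius $\varphi_0(g)$ and positive right eigenvector $r^g_0$, and let $\Phi_1(g)_{(x,y,z),(x',y',z')}=\exp(g(x,y,x',y')+g(x,z,x',z'))P_{x,x'}Q_{y,y'}Q_{z,z'}$ with spectral radius $\varphi_1(g)$ and positive right eigenvector $r^g_1$. For sequences $(x_k)_{k\ge0},(y_k)_{k\ge0},(z_k)_{k\ge0}$ in $E$ put $\sigma_1=\sum_{k=1}^{i}g(x_{k-1},y_{k-1},x_k,y_k)$, $\sigma_2=\sum_{k=i+1}^{\delta_1}[g(x_{k-1},y_{k-1},x_k,y_k)+g(x_{k-1},z_{k-1},x_k,z_k)]$, $\sigma_3=\sum_{k=\delta_1+1}^{i+\delta_2}g(x_{k-1},z_{k-1},x_k,z_k)$, and $$\mathcal L^g=\frac{r^g_0(x_i,y_i)e^{\sigma_1}}{r^g_0(x_0,y_0)\varphi_0(g)^i}\cdot\frac{r^g_1(x_{\delta_1},y_{\delta_1},z_{\delta_1})e^{\sigma_2}}{r^g_1(x_i,y_i,z_i)\varphi_1(g)^{\delta_1-i}}\cdot\frac{r^g_0(x_{i+\delta_2},z_{i+\delta_2})e^{\sigma_3}}{r^g_0(x_{\delta_1},z_{\delta_1})\varphi_0(g)^{i+\delta_2-\delta_1}}.$$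 *)

theory Defs
  imports "HOL-Analysis.Analysis"
begin

fun mpow :: "('i::finite \<Rightarrow> 'i \<Rightarrow> real) \<Rightarrow> nat \<Rightarrow> 'i \<Rightarrow> 'i \<Rightarrow> real" where
  "mpow M 0 = (\<lambda>a b. if a = b then 1 else 0)"
| "mpow M (Suc n) = (\<lambda>a c. \<Sum>b\<in>UNIV. mpow M n a b * M b c)"

definition stochastic :: "('i::finite \<Rightarrow> 'i \<Rightarrow> real) \<Rightarrow> bool" where
  "stochastic M \<longleftrightarrow> (\<forall>a b. M a b \<ge> 0) \<and> (\<forall>a. (\<Sum>b\<in>UNIV. M a b) = 1)"

definition irreducible_mat :: "('i::finite \<Rightarrow> 'i \<Rightarrow> real) \<Rightarrow> bool" where
  "irreducible_mat M \<longleftrightarrow> (\<forall>a b. \<exists>n>0. mpow M n a b > 0)"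

definition aperiodic_mat :: "('i::finite \<Rightarrow> 'i \<Rightarrow> real) \<Rightarrow> bool" where
  "aperiodic_mat M \<longleftrightarrow> (\<forall>a. Gcd {n::nat. n > 0 \<and> mpow M n a a > 0} = 1)"

definition stationary_dist :: "('i::finite \<Rightarrow> real) \<Rightarrow> ('i \<Rightarrow> 'i \<Rightarrow> real) \<Rightarrow> bool" where
  "stationary_dist \<pi> M \<longleftrightarrow> (\<forall>a. \<pi> a \<ge> 0) \<and> (\<Sum>a\<in>UNIV. \<pi> a) = 1
     \<and> (\<forall>b. (\<Sum>a\<in>UNIV. \<pi> a * M a b) = \<pi> b)"

definition mat_eigenvalue :: "('i::finite \<Rightarrow> 'i \<Rightarrow> real) \<Rightarrow> complex \<Rightarrow> bool" where
  "mat_eigenvalue M l \<longleftrightarrow>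
     (\<exists>v :: 'i \<Rightarrow> complex. v \<noteq> (\<lambda>_. 0) \<and> (\<forall>a. (\<Sum>b\<in>UNIV. complex_of_real (M a b) * v b) = l * v a))"

definition spec_radius :: "('i::finite \<Rightarrow> 'i \<Rightarrow> real) \<Rightarrow> real" where
  "spec_radius M = Max {cmod l | l. mat_eigenvalue M l}"

definition pos_right_eigvec :: "('i::finite \<Rightarrow> 'i \<Rightarrow> real) \<Rightarrow> ('i \<Rightarrow> real) \<Rightarrow> bool" where
  "pos_right_eigvec M r \<longleftrightarrow> (\<forall>a. r a > 0) \<and>
     (\<forall>a. (\<Sum>b\<in>UNIV. M a b * r b) = spec_radius M * r a)"

type_synonym 'e pot = "'e \<Rightarrow> 'e \<Rightarrow> 'e \<Rightarrow> 'e \<Rightarrow> real"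
  \<comment> \<open>g x y x' y' stands for g(x,y,x',y')\<close>

definition Phi0 :: "('e::finite \<Rightarrow> 'e \<Rightarrow> real) \<Rightarrow> ('e \<Rightarrow> 'e \<Rightarrow> real) \<Rightarrow> 'e pot
                    \<Rightarrow> ('e \<times> 'e) \<Rightarrow> ('e \<times> 'e) \<Rightarrow> real" where
  "Phi0 P Q g = (\<lambda>(x, y) (x', y'). exp (g x y x' y') * P x x' * Q y y')"

definition Phi1 :: "('e::finite \<Rightarrow> 'e \<Rightarrow> real) \<Rightarrow> ('e \<Rightarrow> 'e \<Rightarrow> real) \<Rightarrow> 'e pot
                    \<Rightarrow> ('e \<times> 'e \<times> 'e) \<Rightarrow> ('e \<times> 'e \<times> 'e) \<Rightarrow> real" where
  "Phi1 P Q g = (\<lambda>(x, y, z) (x', y', z').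
      exp (g x y x' y' + g x z x' z') * P x x' * Q y y' * Q z z')"

definition Lg :: "('e::finite \<Rightarrow> 'e \<Rightarrow> real) \<Rightarrow> ('e \<Rightarrow> 'e \<Rightarrow> real) \<Rightarrow> 'e pot
     \<Rightarrow> ('e \<times> 'e \<Rightarrow> real) \<Rightarrow> ('e \<times> 'e \<times> 'e \<Rightarrow> real)
     \<Rightarrow> nat \<Rightarrow> nat \<Rightarrow> nat \<Rightarrow> (nat \<Rightarrow> 'e) \<Rightarrow> (nat \<Rightarrow> 'e) \<Rightarrow> (nat \<Rightarrow> 'e) \<Rightarrow> real" where
  "Lg P Q g r0 r1 i \<delta>1 \<delta>2 x y z =
    (let \<phi>0 = spec_radius (Phi0 P Q g);
         \<phi>1 = spec_radius (Phi1 P Q g);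
         \<sigma>1 = (\<Sum>k\<in>{1..i}. g (x (k-1)) (y (k-1)) (x k) (y k));
         \<sigma>2 = (\<Sum>k\<in>{i+1..\<delta>1}. g (x (k-1)) (y (k-1)) (x k) (y k) + g (x (k-1)) (z (k-1)) (x k) (z k));
         \<sigma>3 = (\<Sum>k\<in>{\<delta>1+1..i+\<delta>2}. g (x (k-1)) (z (k-1)) (x k) (z k))
     in (r0 (x i, y i) * exp \<sigma>1 / (r0 (x 0, y 0) * \<phi>0 ^ i))
      * (r1 (x \<delta>1, y \<delta>1, z \<delta>1) * exp \<sigma>2 / (r1 (x i, y i, z i) * \<phi>1 ^ (\<delta>1 - i)))
      * (r0 (x (i+\<delta>2), z (i+\<delta>2)) * exp \<sigma>3 / (r0 (x \<delta>1, z \<delta>1) * \<phi>0 ^ (i+\<delta>2-\<delta>1))))"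

text \<open>Paths of length n+1 (times 0..n), and their probability under the Markov chain with
  initial law \<pi> and transition matrix M.\<close>
definition paths :: "nat \<Rightarrow> 'e list set" where
  "paths n = {xs. length xs = Suc n}"

definition path_prob :: "('e \<Rightarrow> real) \<Rightarrow> ('e \<Rightarrow> 'e \<Rightarrow> real) \<Rightarrow> nat \<Rightarrow> 'e list \<Rightarrow> real" where
  "path_prob \<pi> M n xs = \<pi> (xs ! 0) * (\<Prod>k<n. M (xs ! k) (xs ! Suc k))"

text \<open>Expectation of F(X,Y,Z) for independent Markov chains X ~ (\<pi>P,P), Y,Z ~ (\<pi>Q,Q),
  where F depends only on the coordinates 0..n of its arguments.\<close>
definition E3 :: "('e::finite \<Rightarrow> real) \<Rightarrow> ('e \<Rightarrow> 'e \<Rightarrow> real) \<Rightarrow> ('e \<Rightarrow> real) \<Rightarrow> ('e \<Rightarrow> 'e \<Rightarrow> real)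
     \<Rightarrow> nat \<Rightarrow> ((nat \<Rightarrow> 'e) \<Rightarrow> (nat \<Rightarrow> 'e) \<Rightarrow> (nat \<Rightarrow> 'e) \<Rightarrow> real) \<Rightarrow> real" where
  "E3 \<pi>P P \<pi>Q Q n F = (\<Sum>xs\<in>paths n. \<Sum>ys\<in>paths n. \<Sum>zs\<in>paths n.
      path_prob \<pi>P P n xs * path_prob \<pi>Q Q n ys * path_prob \<pi>Q Q n zs
      * F (\<lambda>k. xs ! k) (\<lambda>k. ys ! k) (\<lambda>k. zs ! k))"

definition E2 :: "('e::finite \<Rightarrow> real) \<Rightarrow> ('e \<Rightarrow> 'e \<Rightarrow> real) \<Rightarrow> ('e \<Rightarrow> real) \<Rightarrow> ('e \<Rightarrow> 'e \<Rightarrow> real)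
     \<Rightarrow> nat \<Rightarrow> ((nat \<Rightarrow> 'e) \<Rightarrow> (nat \<Rightarrow> 'e) \<Rightarrow> real) \<Rightarrow> real" where
  "E2 \<pi>P P \<pi>Q Q n F = (\<Sum>xs\<in>paths n. \<Sum>ys\<in>paths n.
      path_prob \<pi>P P n xs * path_prob \<pi>Q Q n ys * F (\<lambda>k. xs ! k) (\<lambda>k. ys ! k))"

end

theory Submission imports Defs begin

lemma finite_paths[simp]: "finite (paths n :: 'e::finite list set)"
proof -
  have "paths n = {xs::'e list. set xs \<subseteq> UNIV \<and> length xs = Suc n}" by (auto simp: paths_def)
  thus ?thesis using finite_lists_length_eq[of "UNIV::'e set" "Suc n"] by simp
qed

lemma paths_Suc_sum:
  "(\<Sum>xs\<in>paths (Suc n). f xs) = (\<Sum>xs\<in>paths n. \<Sum>a\<in>(UNIV::'e::finite set). f (xs @ [a]))"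
proof -
  have bij: "bij_betw (\<lambda>(xs,a). xs @ [a]) (paths n \<times> (UNIV::'e set)) (paths (Suc n))"
  proof (rule bij_betw_imageI)
    show "inj_on (\<lambda>(xs,a). xs @ [a]) (paths n \<times> (UNIV::'e set))" by (auto simp: inj_on_def)
    show "(\<lambda>(xs,a). xs @ [a]) ` (paths n \<times> (UNIV::'e set)) = paths (Suc n)"
    proof
      show "(\<lambda>(xs,a). xs @ [a]) ` (paths n \<times> (UNIV::'e set)) \<subseteq> paths (Suc n)"
        by (auto simp: paths_def)
      show "paths (Suc n) \<subseteq> (\<lambda>(xs,a). xs @ [a]) ` (paths n \<times> (UNIV::'e set))"
      proof
        fix y :: "'e list" assume "y \<in> paths (Suc n)"
        hence "y \<noteq> []" "length y = Suc (Suc n)" by (auto simp: paths_def)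
        thus "y \<in> (\<lambda>(xs,a). xs @ [a]) ` (paths n \<times> (UNIV::'e set))"
          by (intro image_eqI[of _ _ "(butlast y, last y)"]) (auto simp: paths_def)
      qed
    qed
  qed
  have "(\<Sum>xs\<in>paths (Suc n). f xs) = (\<Sum>(xs,a)\<in>paths n \<times> (UNIV::'e set). f (xs @ [a]))"
    using sum.reindex_bij_betw[OF bij, of f, symmetric] by (simp add: case_prod_unfold)
  also have "\<dots> = (\<Sum>xs\<in>paths n. \<Sum>a\<in>(UNIV::'e::finite set). f (xs @ [a]))"
    by (simp add: sum.cartesian_product)
  finally show ?thesis .
qed

lemma paths_0_sum: "(\<Sum>xs\<in>paths 0. f xs) = (\<Sum>a\<in>(UNIV::'e::finite set). f [a])"
proof -
  have "paths 0 = (\<lambda>a::'e. [a]) ` UNIV"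
    by (auto simp: paths_def length_Suc_conv)
  thus ?thesis by (simp add: sum.reindex inj_on_def)
qed

lemma paths_append_sum:
  "(\<Sum>y\<in>paths (a + Suc b). f y) = (\<Sum>u\<in>paths a. \<Sum>v\<in>paths b. f (u @ (v::'e::finite list)))"
proof -
  have bij: "bij_betw (\<lambda>(u,v). u @ v) (paths a \<times> paths b) (paths (a + Suc b) :: 'e list set)"
  proof (rule bij_betw_imageI)
    show "inj_on (\<lambda>(u,v). u @ v) (paths a \<times> paths b :: ('e list \<times> 'e list) set)"
      by (auto simp: inj_on_def paths_def append_eq_append_conv)
    show "(\<lambda>(u,v). u @ v) ` (paths a \<times> paths b) = (paths (a + Suc b) :: 'e list set)"
    proof
      show "(\<lambda>(u,v). u @ v) ` (paths a \<times> paths b) \<subseteq> (paths (a + Suc b) :: 'e list set)"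
        by (auto simp: paths_def)
      show "(paths (a + Suc b) :: 'e list set) \<subseteq> (\<lambda>(u,v). u @ v) ` (paths a \<times> paths b)"
      proof
        fix y :: "'e list" assume "y \<in> paths (a + Suc b)"
        thus "y \<in> (\<lambda>(u,v). u @ v) ` (paths a \<times> paths b)"
          by (intro image_eqI[of _ _ "(take (Suc a) y, drop (Suc a) y)"]) (auto simp: paths_def)
      qed
    qed
  qed
  have "(\<Sum>y\<in>paths (a + Suc b). f y) = (\<Sum>(u,v)\<in>paths a \<times> paths b. f (u @ v))"
    using sum.reindex_bij_betw[OF bij, of f, symmetric] by (simp add: case_prod_unfold)
  also have "\<dots> = (\<Sum>u\<in>paths a. \<Sum>v\<in>paths b. f (u @ (v::'e::finite list)))"
    by (simp add: sum.cartesian_product)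
  finally show ?thesis .
qed

definition pl :: "('e \<Rightarrow> real) \<Rightarrow> ('e \<Rightarrow> 'e \<Rightarrow> real) \<Rightarrow> 'e list \<Rightarrow> real" where
  "pl \<pi> M xs = path_prob \<pi> M (length xs - 1) xs"

lemma pl_paths: "xs \<in> paths n \<Longrightarrow> path_prob \<pi> M n xs = pl \<pi> M xs"
  by (simp add: pl_def paths_def)

lemma pl_single[simp]: "pl \<pi> M [a] = \<pi> a"
  by (simp add: pl_def path_prob_def)

lemma pl_snoc: "xs \<noteq> [] \<Longrightarrow> pl \<pi> M (xs @ [a]) = pl \<pi> M xs * M (last xs) a"
proof -
  assume "xs \<noteq> []"
  then obtain n where n: "length xs = Suc n" by (cases xs) auto
  have "pl \<pi> M (xs @ [a]) = \<pi> (xs ! 0) * (\<Prod>k<Suc n. M ((xs@[a]) ! k) ((xs@[a]) ! Suc k))"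
    using n by (simp add: pl_def path_prob_def nth_append)
  also have "\<dots> = \<pi> (xs ! 0) * (\<Prod>k<n. M (xs ! k) (xs ! Suc k)) * M (xs ! n) a"
    using n by (simp add: nth_append)
  also have "\<dots> = pl \<pi> M xs * M (last xs) a"
    using n \<open>xs \<noteq> []\<close> by (simp add: pl_def path_prob_def last_conv_nth)
  finally show ?thesis .
qed

lemma pl_nonneg: "(\<And>a. \<pi> a \<ge> 0) \<Longrightarrow> (\<And>a b. M a b \<ge> 0) \<Longrightarrow> pl \<pi> M xs \<ge> 0"
  by (auto simp: pl_def path_prob_def intro!: prod_nonneg mult_nonneg_nonneg)

lemma pl_append_le:
  assumes pi: "\<And>a. \<pi> a \<ge> 0" and M: "\<And>a b. M a b \<ge> 0" "\<And>a b. M a b \<le> 1"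
    and "u \<noteq> []" "v \<noteq> []"
  shows "pl \<pi> M (u @ v) * \<pi> (hd v) \<le> pl \<pi> M u * pl \<pi> M v"
  using \<open>v \<noteq> []\<close>
proof (induction v rule: rev_induct)
  case Nil thus ?case by simp
next
  case (snoc c v)
  show ?case
  proof (cases "v = []")
    case True
    have "pl \<pi> M (u @ [c]) * \<pi> c = pl \<pi> M u * (M (last u) c * \<pi> c)"
      using \<open>u \<noteq> []\<close> by (simp add: pl_snoc)
    also have "\<dots> \<le> pl \<pi> M u * \<pi> c"
      by (intro mult_left_mono pl_nonneg) (auto intro: mult_left_le_one_le pi M)
    finally show ?thesis using True by simp
  next
    case False
    have "pl \<pi> M (u @ v @ [c]) * \<pi> (hd (v @ [c])) = (pl \<pi> M (u @ v) * \<pi> (hd v)) * M (last v) c"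
      using False \<open>u \<noteq> []\<close> pl_snoc[of "u @ v" \<pi> M c] by simp
    also have "\<dots> \<le> (pl \<pi> M u * pl \<pi> M v) * M (last v) c"
      using snoc.IH[OF False] by (intro mult_right_mono M)
    also have "\<dots> = pl \<pi> M u * pl \<pi> M (v @ [c])"
      using False by (simp add: pl_snoc)
    finally show ?thesis by simp
  qed
qed


lemma last_len: "length xs = Suc n \<Longrightarrow> last xs = xs ! n"
  by (cases xs rule: rev_cases) auto

definition adv :: "bool \<Rightarrow> 'e list \<Rightarrow> 'e \<Rightarrow> 'e list" where
  "adv b xs a = (if b then xs @ [a] else xs)"
definition UU :: "bool \<Rightarrow> 'e set" where
  "UU b = (if b then UNIV else {undefined})"
definition lnn :: "bool \<Rightarrow> nat \<Rightarrow> nat \<Rightarrow> nat" where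
  "lnn e a n = a + (if e then n else 0)"
definition kk :: "bool \<Rightarrow> ('e \<Rightarrow> 'e \<Rightarrow> real) \<Rightarrow> 'e list \<Rightarrow> 'e \<Rightarrow> real" where
  "kk e M xs p = (if e then M (last xs) p else 1)"

lemma lnn_0[simp]: "lnn e a 0 = a" by (simp add: lnn_def)

lemma split1:
  "(\<Sum>xs\<in>paths (lnn e a (Suc n)). f xs) = (\<Sum>xs\<in>paths (lnn e a n). \<Sum>p\<in>(UU e::'e::finite set). f (adv e xs p))"
  by (cases e) (simp_all add: lnn_def UU_def adv_def paths_Suc_sum)

lemma split3:
  "(\<Sum>x\<in>paths (lnn ex ax (Suc n)). \<Sum>y\<in>paths (lnn ey ay (Suc n)). \<Sum>z\<in>paths (lnn ez az (Suc n)). f x y z) =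
   (\<Sum>x\<in>paths (lnn ex ax n). \<Sum>y\<in>paths (lnn ey ay n). \<Sum>z\<in>paths (lnn ez az n).
      \<Sum>p\<in>(UU ex::'e::finite set). \<Sum>q\<in>(UU ey::'e set). \<Sum>r\<in>(UU ez::'e set). f (adv ex x p) (adv ey y q) (adv ez z r))"
proof -
  have "(\<Sum>x\<in>paths (lnn ex ax (Suc n)). \<Sum>y\<in>paths (lnn ey ay (Suc n)). \<Sum>z\<in>paths (lnn ez az (Suc n)). f x y z) =
   (\<Sum>x\<in>paths (lnn ex ax n). \<Sum>p\<in>(UU ex::'e::finite set). \<Sum>y\<in>paths (lnn ey ay n). \<Sum>q\<in>(UU ey::'e set).
      \<Sum>z\<in>paths (lnn ez az n). \<Sum>r\<in>(UU ez::'e set). f (adv ex x p) (adv ey y q) (adv ez z r))"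
    by (simp add: split1)
  also have "\<dots> = (\<Sum>x\<in>paths (lnn ex ax n). \<Sum>y\<in>paths (lnn ey ay n). \<Sum>p\<in>(UU ex::'e::finite set). \<Sum>q\<in>(UU ey::'e set).
      \<Sum>z\<in>paths (lnn ez az n). \<Sum>r\<in>(UU ez::'e set). f (adv ex x p) (adv ey y q) (adv ez z r))"
    by (intro sum.cong refl sum.swap)
  also have "\<dots> = (\<Sum>x\<in>paths (lnn ex ax n). \<Sum>y\<in>paths (lnn ey ay n). \<Sum>z\<in>paths (lnn ez az n). 
      \<Sum>p\<in>(UU ex::'e::finite set). \<Sum>q\<in>(UU ey::'e set). \<Sum>r\<in>(UU ez::'e set). f (adv ex x p) (adv ey y q) (adv ez z r))"
  proof (intro sum.cong refl)
    fix x y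
    show "(\<Sum>p\<in>(UU ex::'e::finite set). \<Sum>q\<in>(UU ey::'e set). \<Sum>z\<in>paths (lnn ez az n). \<Sum>r\<in>(UU ez::'e set). f (adv ex x p) (adv ey y q) (adv ez z r)) =
      (\<Sum>z\<in>paths (lnn ez az n). \<Sum>p\<in>(UU ex::'e::finite set). \<Sum>q\<in>(UU ey::'e set). \<Sum>r\<in>(UU ez::'e set). f (adv ex x p) (adv ey y q) (adv ez z r))"
      by (subst sum.swap) (simp add: sum.swap[of _ "(UU ey::'e set)"])
  qed
  finally show ?thesis .
qed

lemma tilt_gen:
  fixes G :: "'e::finite list \<Rightarrow> 'e list \<Rightarrow> 'e list \<Rightarrow> real"
    and H :: "nat \<Rightarrow> 'e list \<Rightarrow> 'e list \<Rightarrow> 'e list \<Rightarrow> real"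
    and h :: "nat \<Rightarrow> 'e list \<Rightarrow> 'e list \<Rightarrow> 'e list \<Rightarrow> 'e \<Rightarrow> 'e \<Rightarrow> 'e \<Rightarrow> real"
  assumes G: "\<And>n x y z p q r. x\<in>paths (lnn ex ax n) \<Longrightarrow> y\<in>paths (lnn ey ay n) \<Longrightarrow> z\<in>paths (lnn ez az n) \<Longrightarrow>
      p\<in>UU ex \<Longrightarrow> q\<in>UU ey \<Longrightarrow> r\<in>UU ez \<Longrightarrow> G (adv ex x p) (adv ey y q) (adv ez z r) = G x y z"
    and H0: "\<And>x y z. x\<in>paths ax \<Longrightarrow> y\<in>paths ay \<Longrightarrow> z\<in>paths az \<Longrightarrow> H 0 x y z = 1"
    and HS: "\<And>n x y z p q r. x\<in>paths (lnn ex ax n) \<Longrightarrow> y\<in>paths (lnn ey ay n) \<Longrightarrow> z\<in>paths (lnn ez az n) \<Longrightarrow>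
      p\<in>UU ex \<Longrightarrow> q\<in>UU ey \<Longrightarrow> r\<in>UU ez \<Longrightarrow>
      H (Suc n) (adv ex x p) (adv ey y q) (adv ez z r) = H n x y z * h n x y z p q r"
    and hsum: "\<And>n x y z. x\<in>paths (lnn ex ax n) \<Longrightarrow> y\<in>paths (lnn ey ay n) \<Longrightarrow> z\<in>paths (lnn ez az n) \<Longrightarrow>
      (\<Sum>p\<in>UU ex. \<Sum>q\<in>UU ey. \<Sum>r\<in>UU ez. kk ex P1 x p * kk ey Q1 y q * kk ez Q2 z r * h n x y z p q r) = 1"
  shows "(\<Sum>x\<in>paths (lnn ex ax n). \<Sum>y\<in>paths (lnn ey ay n). \<Sum>z\<in>paths (lnn ez az n).
            pl \<pi>1 P1 x * pl \<pi>2 Q1 y * pl \<pi>3 Q2 z * G x y z * H n x y z)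
       = (\<Sum>x\<in>paths ax. \<Sum>y\<in>paths ay. \<Sum>z\<in>paths az. pl \<pi>1 P1 x * pl \<pi>2 Q1 y * pl \<pi>3 Q2 z * G x y z)"
proof (induction n)
  case 0
  show ?case by (intro sum.cong refl) (simp_all add: H0)
next
  case (Suc n)
  have ne: "xs \<in> paths m \<Longrightarrow> xs \<noteq> []" for xs :: "'e list" and m by (auto simp: paths_def)
  have pladv: "xs \<in> paths m \<Longrightarrow> pl \<pi> M (adv e xs p) = pl \<pi> M xs * kk e M xs p" for xs :: "'e list" and m \<pi> M e p
    using ne[of xs m] by (simp add: adv_def kk_def pl_snoc)
  have "(\<Sum>x\<in>paths (lnn ex ax (Suc n)). \<Sum>y\<in>paths (lnn ey ay (Suc n)). \<Sum>z\<in>paths (lnn ez az (Suc n)).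
            pl \<pi>1 P1 x * pl \<pi>2 Q1 y * pl \<pi>3 Q2 z * G x y z * H (Suc n) x y z)
      = (\<Sum>x\<in>paths (lnn ex ax n). \<Sum>y\<in>paths (lnn ey ay n). \<Sum>z\<in>paths (lnn ez az n).
            pl \<pi>1 P1 x * pl \<pi>2 Q1 y * pl \<pi>3 Q2 z * G x y z * H n x y z)"
    unfolding split3
  proof (intro sum.cong refl)
    fix x y z :: "'e list" assume x: "x \<in> paths (lnn ex ax n)" and y: "y \<in> paths (lnn ey ay n)" and z: "z \<in> paths (lnn ez az n)"
    define C where "C = pl \<pi>1 P1 x * pl \<pi>2 Q1 y * pl \<pi>3 Q2 z * G x y z * H n x y z"
    have "(\<Sum>p\<in>UU ex. \<Sum>q\<in>UU ey. \<Sum>r\<in>UU ez.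
            pl \<pi>1 P1 (adv ex x p) * pl \<pi>2 Q1 (adv ey y q) * pl \<pi>3 Q2 (adv ez z r) *
            G (adv ex x p) (adv ey y q) (adv ez z r) * H (Suc n) (adv ex x p) (adv ey y q) (adv ez z r))
        = (\<Sum>p\<in>UU ex. \<Sum>q\<in>UU ey. \<Sum>r\<in>UU ez. C * (kk ex P1 x p * kk ey Q1 y q * kk ez Q2 z r * h n x y z p q r))"
      by (intro sum.cong refl) (simp add: pladv[OF x] pladv[OF y] pladv[OF z] G[OF x y z] HS[OF x y z] C_def)
    also have "\<dots> = C * (\<Sum>p\<in>UU ex. \<Sum>q\<in>UU ey. \<Sum>r\<in>UU ez. kk ex P1 x p * kk ey Q1 y q * kk ez Q2 z r * h n x y z p q r)"
      by (simp add: sum_distrib_left mult.assoc)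
    also have "\<dots> = C" using hsum[OF x y z] by simp
    finally show "(\<Sum>p\<in>UU ex. \<Sum>q\<in>UU ey. \<Sum>r\<in>UU ez.
            pl \<pi>1 P1 (adv ex x p) * pl \<pi>2 Q1 (adv ey y q) * pl \<pi>3 Q2 (adv ez z r) *
            G (adv ex x p) (adv ey y q) (adv ez z r) * H (Suc n) (adv ex x p) (adv ey y q) (adv ez z r)) =
          pl \<pi>1 P1 x * pl \<pi>2 Q1 y * pl \<pi>3 Q2 z * G x y z * H n x y z" by (simp add: C_def)
  qed
  thus ?case using Suc.IH by simp
qed


definition tilt :: "('s \<Rightarrow> real) \<Rightarrow> ('s \<Rightarrow> 's \<Rightarrow> real) \<Rightarrow> real \<Rightarrow> (nat \<Rightarrow> 's) \<Rightarrow> nat \<Rightarrow> nat \<Rightarrow> real" where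
  "tilt R W \<phi> s m n = R (s n) * exp (\<Sum>k\<in>{m+1..n}. W (s (k-1)) (s k)) / (R (s m) * \<phi> ^ (n - m))"

lemma tilt_same: "R (s m) \<noteq> 0 \<Longrightarrow> tilt R W \<phi> s m m = 1"
  by (simp add: tilt_def)

lemma tilt_Suc:
  assumes "m \<le> n" "R (s n) \<noteq> 0"
  shows "tilt R W \<phi> s m (Suc n) = tilt R W \<phi> s m n * (exp (W (s n) (s (Suc n))) * R (s (Suc n)) / (R (s n) * \<phi>))"
proof -
  have set: "{m+1..Suc n} = insert (Suc n) {m+1..n}" using assms(1) by auto
  have pw: "Suc n - m = Suc (n - m)" using assms(1) by simp
  have nl: "\<not> n < m" using assms(1) by simp
  show ?thesis using assms(2) nl
    by (simp add: tilt_def set pw exp_add field_simps)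
qed

lemma tilt_cong:
  assumes "\<And>k. m \<le> k \<Longrightarrow> k \<le> n \<Longrightarrow> s k = s' k" and True: "m \<le> n"
  shows "tilt R W \<phi> s m n = tilt R W \<phi> s' m n"
proof -
  have "(\<Sum>k\<in>{m+1..n}. W (s (k-1)) (s k)) = (\<Sum>k\<in>{m+1..n}. W (s' (k-1)) (s' k))"
    by (intro sum.cong refl) (auto simp: assms)
  thus ?thesis using True by (simp add: tilt_def assms)
qed

lemma tilt_nonneg: "(\<And>a. R a > 0) \<Longrightarrow> \<phi> > 0 \<Longrightarrow> tilt R W \<phi> s m n \<ge> 0"
  by (simp add: tilt_def less_imp_le)

lemma tilt_gen2:
  fixes G :: "'e::finite list \<Rightarrow> 'e list \<Rightarrow> 'e list \<Rightarrow> real"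
    and st :: "'e list \<Rightarrow> 'e list \<Rightarrow> 'e list \<Rightarrow> nat \<Rightarrow> 's"
  assumes G: "\<And>n x y z p q r. x\<in>paths (lnn ex ax n) \<Longrightarrow> y\<in>paths (lnn ey ay n) \<Longrightarrow> z\<in>paths (lnn ez az n) \<Longrightarrow>
      p\<in>UU ex \<Longrightarrow> q\<in>UU ey \<Longrightarrow> r\<in>UU ez \<Longrightarrow> G (adv ex x p) (adv ey y q) (adv ez z r) = G x y z"
    and Rpos: "\<And>a. R a > 0"
    and st_adv: "\<And>n x y z p q r k. x\<in>paths (lnn ex ax n) \<Longrightarrow> y\<in>paths (lnn ey ay n) \<Longrightarrow> z\<in>paths (lnn ez az n) \<Longrightarrow>
      p\<in>UU ex \<Longrightarrow> q\<in>UU ey \<Longrightarrow> r\<in>UU ez \<Longrightarrow> m \<le> k \<Longrightarrow> k \<le> m + n \<Longrightarrow>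
      st (adv ex x p) (adv ey y q) (adv ez z r) k = st x y z k"
    and hsum: "\<And>n x y z. x\<in>paths (lnn ex ax n) \<Longrightarrow> y\<in>paths (lnn ey ay n) \<Longrightarrow> z\<in>paths (lnn ez az n) \<Longrightarrow>
      (\<Sum>p\<in>UU ex. \<Sum>q\<in>UU ey. \<Sum>r\<in>UU ez. kk ex P1 x p * kk ey Q1 y q * kk ez Q2 z r *
        (exp (W (st x y z (m+n)) (st (adv ex x p) (adv ey y q) (adv ez z r) (Suc (m+n))))
          * R (st (adv ex x p) (adv ey y q) (adv ez z r) (Suc (m+n))) / (R (st x y z (m+n)) * \<phi>))) = 1"
  shows "(\<Sum>x\<in>paths (lnn ex ax n). \<Sum>y\<in>paths (lnn ey ay n). \<Sum>z\<in>paths (lnn ez az n).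
            pl \<pi>1 P1 x * pl \<pi>2 Q1 y * pl \<pi>3 Q2 z * G x y z * tilt R W \<phi> (st x y z) m (m + n))
       = (\<Sum>x\<in>paths ax. \<Sum>y\<in>paths ay. \<Sum>z\<in>paths az. pl \<pi>1 P1 x * pl \<pi>2 Q1 y * pl \<pi>3 Q2 z * G x y z)"
proof (rule tilt_gen[where H="\<lambda>n x y z. tilt R W \<phi> (st x y z) m (m + n)"
    and h="\<lambda>n x y z p q r. exp (W (st x y z (m+n)) (st (adv ex x p) (adv ey y q) (adv ez z r) (Suc (m+n))))
          * R (st (adv ex x p) (adv ey y q) (adv ez z r) (Suc (m+n))) / (R (st x y z (m+n)) * \<phi>)"])
  show "\<And>n x y z p q r. x\<in>paths (lnn ex ax n) \<Longrightarrow> y\<in>paths (lnn ey ay n) \<Longrightarrow> z\<in>paths (lnn ez az n) \<Longrightarrow>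
      p\<in>UU ex \<Longrightarrow> q\<in>UU ey \<Longrightarrow> r\<in>UU ez \<Longrightarrow> G (adv ex x p) (adv ey y q) (adv ez z r) = G x y z"
    by (rule G)
  show "\<And>x y z. tilt R W \<phi> (st x y z) m (m + 0) = 1"
    using Rpos by (simp add: tilt_same less_imp_neq[symmetric])
next
  fix n and x y z :: "'e list" and p q r :: 'e
  assume a: "x\<in>paths (lnn ex ax n)" "y\<in>paths (lnn ey ay n)" "z\<in>paths (lnn ez az n)"
      "p\<in>UU ex" "q\<in>UU ey" "r\<in>UU ez"
  let ?s' = "st (adv ex x p) (adv ey y q) (adv ez z r)"
  have "tilt R W \<phi> ?s' m (m + Suc n) = tilt R W \<phi> ?s' m (m + n) *
     (exp (W (?s' (m+n)) (?s' (Suc (m+n)))) * R (?s' (Suc (m+n))) / (R (?s' (m+n)) * \<phi>))"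
    using Rpos tilt_Suc[of m "m+n" R ?s' W \<phi>] by (simp add: less_imp_neq[symmetric])
  also have "tilt R W \<phi> ?s' m (m + n) = tilt R W \<phi> (st x y z) m (m + n)"
    by (rule tilt_cong) (rule st_adv[OF a], auto)
  also have "?s' (m+n) = st x y z (m+n)" by (rule st_adv[OF a]) auto
  finally show "tilt R W \<phi> ?s' m (m + Suc n) = tilt R W \<phi> (st x y z) m (m + n) *
     (exp (W (st x y z (m+n)) (?s' (Suc (m+n)))) * R (?s' (Suc (m+n))) / (R (st x y z (m+n)) * \<phi>))" .
next
  fix n and x y z :: "'e list"
  assume a: "x\<in>paths (lnn ex ax n)" "y\<in>paths (lnn ey ay n)" "z\<in>paths (lnn ez az n)"
  show "(\<Sum>p\<in>UU ex. \<Sum>q\<in>UU ey. \<Sum>r\<in>UU ez. kk ex P1 x p * kk ey Q1 y q * kk ez Q2 z r *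
        (exp (W (st x y z (m+n)) (st (adv ex x p) (adv ey y q) (adv ez z r) (Suc (m+n))))
          * R (st (adv ex x p) (adv ey y q) (adv ez z r) (Suc (m+n))) / (R (st x y z (m+n)) * \<phi>))) = 1"
    by (rule hsum[OF a])
qed


definition W01 :: "('e \<Rightarrow> 'e \<Rightarrow> 'e \<Rightarrow> 'e \<Rightarrow> real) \<Rightarrow> ('e \<times> 'e) \<Rightarrow> ('e \<times> 'e) \<Rightarrow> real" where
  "W01 g = (\<lambda>(a,b) (a',b'). g a b a' b')"
definition W12 :: "('e \<Rightarrow> 'e \<Rightarrow> 'e \<Rightarrow> 'e \<Rightarrow> real) \<Rightarrow> ('e \<times> 'e \<times> 'e) \<Rightarrow> ('e \<times> 'e \<times> 'e) \<Rightarrow> real" where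
  "W12 g = (\<lambda>(a,b,c) (a',b',c'). g a b a' b' + g a c a' c')"

lemma Lg_eq: "Lg P Q g r0 r1 i d e x y z =
   tilt r0 (W01 g) (spec_radius (Phi0 P Q g)) (\<lambda>k. (x k, y k)) 0 i *
   tilt r1 (W12 g) (spec_radius (Phi1 P Q g)) (\<lambda>k. (x k, y k, z k)) i d *
   tilt r0 (W01 g) (spec_radius (Phi0 P Q g)) (\<lambda>k. (x k, z k)) d (i + e)"
  by (simp add: Lg_def tilt_def W01_def W12_def Let_def)

lemma pos_lemma:
  fixes f w :: "'a::finite \<Rightarrow> real"
  assumes "\<And>x. f x \<ge> 0" "sum f UNIV = 1" "\<And>x. w x > 0"
  shows "(\<Sum>x\<in>UNIV. f x * w x) > 0"
proof -
  obtain x0 where x0: "f x0 > 0"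
  proof (rule ccontr)
    assume "\<not> thesis"
    hence "f x = 0" for x using assms(1)[of x] that[of x] by linarith
    thus False using assms(2) by simp
  qed
  have "f x0 * w x0 \<le> (\<Sum>x\<in>UNIV. f x * w x)"
    by (rule member_le_sum) (auto intro: mult_nonneg_nonneg assms less_imp_le)
  moreover have "f x0 * w x0 > 0" using x0 assms(3) by simp
  ultimately show ?thesis by linarith
qed

lemma sum_UNIV_pair: "(\<Sum>b\<in>(UNIV::('a::finite\<times>'b::finite) set). f b) = (\<Sum>p\<in>UNIV. \<Sum>q\<in>UNIV. f (p,q))"
  by (simp add: UNIV_Times_UNIV[symmetric] sum.cartesian_product del: UNIV_Times_UNIV)

lemma eig0:
  assumes "pos_right_eigvec (Phi0 P Q g) r0"
  shows "(\<Sum>p\<in>UNIV. P a p * (\<Sum>q\<in>UNIV. Q b q * (exp (g a b p q) * r0 (p,q)))) = spec_radius (Phi0 P Q g) * r0 (a,b)"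
proof -
  have "spec_radius (Phi0 P Q g) * r0 (a,b) = (\<Sum>c\<in>UNIV. Phi0 P Q g (a,b) c * r0 c)"
    using assms by (simp add: pos_right_eigvec_def)
  also have "\<dots> = (\<Sum>p\<in>UNIV. \<Sum>q\<in>UNIV. Phi0 P Q g (a,b) (p,q) * r0 (p,q))" by (rule sum_UNIV_pair)
  also have "\<dots> = (\<Sum>p\<in>UNIV. P a p * (\<Sum>q\<in>UNIV. Q b q * (exp (g a b p q) * r0 (p,q))))"
    by (simp add: Phi0_def sum_distrib_left mult_ac)
  finally show ?thesis by simp
qed

lemma eig1:
  assumes "pos_right_eigvec (Phi1 P Q g) r1"
  shows "(\<Sum>p\<in>UNIV. P a p * (\<Sum>q\<in>UNIV. Q b q * (\<Sum>r\<in>UNIV. Q c r * (exp (g a b p q + g a c p r) * r1 (p,q,r)))))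
     = spec_radius (Phi1 P Q g) * r1 (a,b,c)"
proof -
  have "spec_radius (Phi1 P Q g) * r1 (a,b,c) = (\<Sum>t\<in>UNIV. Phi1 P Q g (a,b,c) t * r1 t)"
    using assms by (simp add: pos_right_eigvec_def)
  also have "\<dots> = (\<Sum>p\<in>UNIV. \<Sum>t\<in>UNIV. Phi1 P Q g (a,b,c) (p,t) * r1 (p,t))" by (rule sum_UNIV_pair)
  also have "\<dots> = (\<Sum>p\<in>UNIV. \<Sum>q\<in>UNIV. \<Sum>r\<in>UNIV. Phi1 P Q g (a,b,c) (p,q,r) * r1 (p,q,r))"
    by (intro sum.cong refl sum_UNIV_pair)
  also have "\<dots> = (\<Sum>p\<in>UNIV. P a p * (\<Sum>q\<in>UNIV. Q b q * (\<Sum>r\<in>UNIV. Q c r * (exp (g a b p q + g a c p r) * r1 (p,q,r)))))"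
    by (simp add: Phi1_def sum_distrib_left mult_ac)
  finally show ?thesis by simp
qed


context
  fixes P Q :: "'e::finite \<Rightarrow> 'e \<Rightarrow> real" and \<pi>P \<pi>Q :: "'e \<Rightarrow> real" and g :: "'e pot"
    and r0 :: "'e \<times> 'e \<Rightarrow> real" and r1 :: "'e \<times> 'e \<times> 'e \<Rightarrow> real"
  assumes sP: "stochastic P" and sQ: "stochastic Q"
    and piP: "sum \<pi>P UNIV = 1" and piQ: "sum \<pi>Q UNIV = 1"
    and e0: "pos_right_eigvec (Phi0 P Q g) r0" and e1: "pos_right_eigvec (Phi1 P Q g) r1"
begin

abbreviation "ph0 \<equiv> spec_radius (Phi0 P Q g)"
abbreviation "ph1 \<equiv> spec_radius (Phi1 P Q g)"

lemma r0pos: "r0 a > 0" using e0 by (cases a) (simp add: pos_right_eigvec_def)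
lemma r1pos: "r1 a > 0" using e1 by (cases a) (simp add: pos_right_eigvec_def)
lemma Pnn: "P a b \<ge> 0" using sP by (simp add: stochastic_def)
lemma Qnn: "Q a b \<ge> 0" using sQ by (simp add: stochastic_def)
lemma Psum: "(\<Sum>b\<in>UNIV. P a b) = 1" using sP by (simp add: stochastic_def)
lemma Qsum: "(\<Sum>b\<in>UNIV. Q a b) = 1" using sQ by (simp add: stochastic_def)

lemma ph0pos: "ph0 > 0"
proof -
  fix a b :: 'e
  have "(\<Sum>p\<in>UNIV. P a p * (\<Sum>q\<in>UNIV. Q b q * (exp (g a b p q) * r0 (p,q)))) > 0"
    by (intro pos_lemma Pnn Psum Qnn Qsum mult_pos_pos r0pos exp_gt_zero)
  hence "ph0 * r0 (a,b) > 0" using eig0[OF e0] by simp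
  thus ?thesis using r0pos[of "(a,b)"] by (simp add: zero_less_mult_iff)
qed

lemma ph1pos: "ph1 > 0"
proof -
  fix a b c :: 'e
  have "(\<Sum>p\<in>UNIV. P a p * (\<Sum>q\<in>UNIV. Q b q * (\<Sum>r\<in>UNIV. Q c r * (exp (g a b p q + g a c p r) * r1 (p,q,r))))) > 0"
    by (intro pos_lemma Pnn Psum Qnn Qsum mult_pos_pos r1pos exp_gt_zero)
  hence "ph1 * r1 (a,b,c) > 0" using eig1[OF e1] by simp
  thus ?thesis using r1pos[of "(a,b,c)"] by (simp add: zero_less_mult_iff)
qed

lemma hs0: "(\<Sum>p\<in>UNIV. \<Sum>q\<in>UNIV. P a p * Q b q * (exp (g a b p q) * r0 (p,q)) / (r0 (a,b) * ph0)) = 1"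
proof -
  have "(\<Sum>p\<in>UNIV. \<Sum>q\<in>UNIV. P a p * Q b q * (exp (g a b p q) * r0 (p,q)) / (r0 (a,b) * ph0))
    = (\<Sum>p\<in>UNIV. P a p * (\<Sum>q\<in>UNIV. Q b q * (exp (g a b p q) * r0 (p,q)))) / (r0 (a,b) * ph0)"
    by (simp add: sum_divide_distrib sum_distrib_left mult_ac)
  also have "\<dots> = 1" using eig0[OF e0, of a b] r0pos[of "(a,b)"] ph0pos by simp
  finally show ?thesis .
qed

lemma hs1: "(\<Sum>p\<in>UNIV. \<Sum>q\<in>UNIV. \<Sum>r\<in>UNIV. P a p * Q b q * Q c r *
    (exp (g a b p q + g a c p r) * r1 (p,q,r)) / (r1 (a,b,c) * ph1)) = 1"
proof -
  have "(\<Sum>p\<in>UNIV. \<Sum>q\<in>UNIV. \<Sum>r\<in>UNIV. P a p * Q b q * Q c r *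
    (exp (g a b p q + g a c p r) * r1 (p,q,r)) / (r1 (a,b,c) * ph1))
    = (\<Sum>p\<in>UNIV. P a p * (\<Sum>q\<in>UNIV. Q b q * (\<Sum>r\<in>UNIV. Q c r * (exp (g a b p q + g a c p r) * r1 (p,q,r))))) / (r1 (a,b,c) * ph1)"
    by (simp add: sum_divide_distrib sum_distrib_left mult_ac)
  also have "\<dots> = 1" using eig1[OF e1, of a b c] r1pos[of "(a,b,c)"] ph1pos by simp
  finally show ?thesis .
qed

lemma step5:
  "(\<Sum>x\<in>paths i. \<Sum>u\<in>paths i. \<Sum>v\<in>paths 0. pl \<pi>P P x * pl \<pi>Q Q u * pl \<pi>Q Q v *
      tilt r0 (W01 g) ph0 (\<lambda>k. (x!k, u!k)) 0 i) = 1"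
proof -
  have "(\<Sum>x\<in>paths (lnn True 0 i). \<Sum>u\<in>paths (lnn True 0 i). \<Sum>v\<in>paths (lnn False 0 i).
            pl \<pi>P P x * pl \<pi>Q Q u * pl \<pi>Q Q v * (\<lambda>_ _ _. 1) x u v * tilt r0 (W01 g) ph0 ((\<lambda>x u v k. (x!k, u!k)) x u v) 0 (0 + i))
       = (\<Sum>x\<in>paths 0. \<Sum>u\<in>paths 0. \<Sum>v\<in>paths 0. pl \<pi>P P x * pl \<pi>Q Q u * pl \<pi>Q Q v * (\<lambda>_ _ _. 1) x u v)"
  proof (rule tilt_gen2)
    show "\<And>a. 0 < r0 a" by (rule r0pos)
  next
    fix n k and x y z :: "'e list" and p q r :: 'e
    assume "x\<in>paths (lnn True 0 n)" "y\<in>paths (lnn True 0 n)" "z\<in>paths (lnn False 0 n)" "0 \<le> k" "k \<le> 0 + n"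
    thus "(adv True x p ! k, adv True y q ! k) = (x ! k, y ! k)"
      by (simp add: adv_def nth_append paths_def lnn_def)
  next
    fix n and x y z :: "'e list"
    assume "x\<in>paths (lnn True 0 n)" "y\<in>paths (lnn True 0 n)" "z\<in>paths (lnn False 0 n)"
    thus "(\<Sum>p\<in>UU True. \<Sum>q\<in>UU True. \<Sum>r\<in>UU False. kk True P x p * kk True Q y q * kk False Q z r *
        (exp (W01 g (x ! (0 + n), y ! (0 + n)) (adv True x p ! Suc (0 + n), adv True y q ! Suc (0 + n))) *
         r0 (adv True x p ! Suc (0 + n), adv True y q ! Suc (0 + n)) / (r0 (x ! (0 + n), y ! (0 + n)) * ph0))) = 1"
      by (simp add: adv_def nth_append paths_def lnn_def UU_def kk_def last_len W01_def hs0)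
  qed simp
  thus ?thesis by (simp add: lnn_def paths_0_sum sum_distrib_left[symmetric] sum_distrib_right[symmetric] piP piQ)
qed


lemma hsum_xz:
  fixes x y z :: "'e list"
  assumes "length x = Suc N1" "length z = Suc N2"
  shows "(\<Sum>p\<in>UU True. \<Sum>q\<in>UU False. \<Sum>r\<in>UU True. kk True P x p * kk False Q y q * kk True Q z r *
        (exp (W01 g (x ! N1, z ! N2) (adv True x p ! Suc N1, adv True z r ! Suc N2)) *
         r0 (adv True x p ! Suc N1, adv True z r ! Suc N2) /
        (r0 (x ! N1, z ! N2) * ph0))) = 1"
  using assms
  apply (simp add: adv_def nth_append UU_def kk_def last_len W01_def)
  using hs0 by simp

lemma step4:
  "(\<Sum>x\<in>paths i. \<Sum>u\<in>paths i. \<Sum>v\<in>paths s. pl \<pi>P P x * pl \<pi>Q Q u * pl \<pi>Q Q v * G x u) =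
   (\<Sum>x\<in>paths i. \<Sum>u\<in>paths i. \<Sum>v\<in>paths 0. pl \<pi>P P x * pl \<pi>Q Q u * pl \<pi>Q Q v * G x u)"
proof -
  have "(\<Sum>x\<in>paths (lnn False i s). \<Sum>u\<in>paths (lnn False i s). \<Sum>v\<in>paths (lnn True 0 s).
            pl \<pi>P P x * pl \<pi>Q Q u * pl \<pi>Q Q v * (\<lambda>x u v. G x u) x u v * (\<lambda>_ _ _ _. 1) s x u v)
       = (\<Sum>x\<in>paths i. \<Sum>u\<in>paths i. \<Sum>v\<in>paths 0. pl \<pi>P P x * pl \<pi>Q Q u * pl \<pi>Q Q v * (\<lambda>x u v. G x u) x u v)"
    by (rule tilt_gen[where h="\<lambda>_ _ _ _ _ _ _. 1"]) (simp_all add: adv_def UU_def kk_def Qsum)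
  thus ?thesis by (simp add: lnn_def)
qed

lemma step3:
  assumes "i \<le> d"
  shows
  "(\<Sum>x\<in>paths d. \<Sum>u\<in>paths d. \<Sum>v\<in>paths (s + (d - i)). pl \<pi>P P x * pl \<pi>Q Q u * pl \<pi>Q Q v *
      tilt r0 (W01 g) ph0 (\<lambda>k. (x!k, u!k)) 0 i * tilt r1 (W12 g) ph1 (\<lambda>k. (x!k, u!k, v!(k-i+s))) i d) =
   (\<Sum>x\<in>paths i. \<Sum>u\<in>paths i. \<Sum>v\<in>paths s. pl \<pi>P P x * pl \<pi>Q Q u * pl \<pi>Q Q v *
      tilt r0 (W01 g) ph0 (\<lambda>k. (x!k, u!k)) 0 i)"
proof -
  have "(\<Sum>x\<in>paths (lnn True i (d-i)). \<Sum>u\<in>paths (lnn True i (d-i)). \<Sum>v\<in>paths (lnn True s (d-i)).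
            pl \<pi>P P x * pl \<pi>Q Q u * pl \<pi>Q Q v * (\<lambda>x u v. tilt r0 (W01 g) ph0 (\<lambda>k. (x!k, u!k)) 0 i) x u v
            * tilt r1 (W12 g) ph1 ((\<lambda>x u v k. (x!k, u!k, v!(k-i+s))) x u v) i (i + (d-i)))
       = (\<Sum>x\<in>paths i. \<Sum>u\<in>paths i. \<Sum>v\<in>paths s. pl \<pi>P P x * pl \<pi>Q Q u * pl \<pi>Q Q v *
            (\<lambda>x u v. tilt r0 (W01 g) ph0 (\<lambda>k. (x!k, u!k)) 0 i) x u v)"
  proof (rule tilt_gen2)
    fix n and x y z :: "'e list" and p q r :: 'e
    assume "x\<in>paths (lnn True i n)" "y\<in>paths (lnn True i n)" "z\<in>paths (lnn True s n)"
    thus "tilt r0 (W01 g) ph0 (\<lambda>k. (adv True x p ! k, adv True y q ! k)) 0 i = tilt r0 (W01 g) ph0 (\<lambda>k. (x!k, y!k)) 0 i"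
      by (intro tilt_cong) (auto simp: adv_def nth_append paths_def lnn_def)
  next
    show "\<And>a. 0 < r1 a" by (rule r1pos)
  next
    fix n k and x y z :: "'e list" and p q r :: 'e
    assume "x\<in>paths (lnn True i n)" "y\<in>paths (lnn True i n)" "z\<in>paths (lnn True s n)" "i \<le> k" "k \<le> i + n"
    thus "(adv True x p ! k, adv True y q ! k, adv True z r ! (k - i + s)) = (x ! k, y ! k, z ! (k - i + s))"
      by (auto simp add: adv_def nth_append paths_def lnn_def)
  next
    fix n and x y z :: "'e list"
    assume "x\<in>paths (lnn True i n)" "y\<in>paths (lnn True i n)" "z\<in>paths (lnn True s n)"
    thus "(\<Sum>p\<in>UU True. \<Sum>q\<in>UU True. \<Sum>r\<in>UU True. kk True P x p * kk True Q y q * kk True Q z r *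
        (exp (W12 g (x ! (i + n), y ! (i + n), z ! (i + n - i + s))
          (adv True x p ! Suc (i + n), adv True y q ! Suc (i + n), adv True z r ! (Suc (i + n) - i + s))) *
         r1 (adv True x p ! Suc (i + n), adv True y q ! Suc (i + n), adv True z r ! (Suc (i + n) - i + s)) /
        (r1 (x ! (i + n), y ! (i + n), z ! (i + n - i + s)) * ph1))) = 1"
      by (simp add: adv_def nth_append paths_def lnn_def UU_def kk_def last_len W12_def hs1 add.commute)
  qed
  thus ?thesis using assms by (simp add: lnn_def)
qed

lemma step1:
  assumes "m \<le> nx"
    and G: "\<And>x x' u v. (\<And>k. k \<le> m \<Longrightarrow> x ! k = x' ! k) \<Longrightarrow> G x u v = G x' u v"
  shows
  "(\<Sum>x\<in>paths nx. \<Sum>u\<in>paths a. \<Sum>v\<in>paths b. pl \<pi>P P x * pl \<pi>Q Q u * pl \<pi>Q Q v * G x u v) =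
   (\<Sum>x\<in>paths m. \<Sum>u\<in>paths a. \<Sum>v\<in>paths b. pl \<pi>P P x * pl \<pi>Q Q u * pl \<pi>Q Q v * G x u v)"
proof -
  have "(\<Sum>x\<in>paths (lnn True m (nx - m)). \<Sum>u\<in>paths (lnn False a (nx - m)). \<Sum>v\<in>paths (lnn False b (nx - m)).
            pl \<pi>P P x * pl \<pi>Q Q u * pl \<pi>Q Q v * G x u v * (\<lambda>_ _ _ _. 1) (nx - m) x u v)
       = (\<Sum>x\<in>paths m. \<Sum>u\<in>paths a. \<Sum>v\<in>paths b. pl \<pi>P P x * pl \<pi>Q Q u * pl \<pi>Q Q v * G x u v)"
  proof (rule tilt_gen[where h="\<lambda>_ _ _ _ _ _ _. 1" and H="\<lambda>_ _ _ _. 1" and G=G])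
    fix n and x y z :: "'e list" and p q r :: 'e
    assume "x\<in>paths (lnn True m n)"
    thus "G (adv True x p) (adv False y q) (adv False z r) = G x y z"
      by (simp add: adv_def) (rule G, auto simp: nth_append paths_def lnn_def)
  qed (simp_all add: adv_def UU_def kk_def Psum)
  thus ?thesis using assms(1) by (simp add: lnn_def)
qed

lemma step_y:
  assumes "m \<le> ny"
    and G: "\<And>x u u' v. (\<And>k. k \<le> m \<Longrightarrow> u ! k = u' ! k) \<Longrightarrow> G x u v = G x u' v"
  shows
  "(\<Sum>x\<in>paths a. \<Sum>u\<in>paths ny. \<Sum>v\<in>paths b. pl \<pi>P P x * pl \<pi>Q Q u * pl \<pi>Q Q v * G x u v) =
   (\<Sum>x\<in>paths a. \<Sum>u\<in>paths m. \<Sum>v\<in>paths b. pl \<pi>P P x * pl \<pi>Q Q u * pl \<pi>Q Q v * G x u v)"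
proof -
  have "(\<Sum>x\<in>paths (lnn False a (ny - m)). \<Sum>u\<in>paths (lnn True m (ny - m)). \<Sum>v\<in>paths (lnn False b (ny - m)).
            pl \<pi>P P x * pl \<pi>Q Q u * pl \<pi>Q Q v * G x u v * (\<lambda>_ _ _ _. 1) (ny - m) x u v)
       = (\<Sum>x\<in>paths a. \<Sum>u\<in>paths m. \<Sum>v\<in>paths b. pl \<pi>P P x * pl \<pi>Q Q u * pl \<pi>Q Q v * G x u v)"
  proof (rule tilt_gen[where h="\<lambda>_ _ _ _ _ _ _. 1" and H="\<lambda>_ _ _ _. 1" and G=G])
    fix n and x y z :: "'e list" and p q r :: 'e
    assume "y\<in>paths (lnn True m n)"
    thus "G (adv False x p) (adv True y q) (adv False z r) = G x y z"
      by (simp add: adv_def) (rule G, auto simp: nth_append paths_def lnn_def)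
  qed (simp_all add: adv_def UU_def kk_def Qsum)
  thus ?thesis using assms(1) by (simp add: lnn_def)
qed
lemma step2:
  assumes "i \<le> d" "d \<le> i + e"
  shows
  "(\<Sum>x\<in>paths (i + e). \<Sum>u\<in>paths d. \<Sum>v\<in>paths (s + e). pl \<pi>P P x * pl \<pi>Q Q u * pl \<pi>Q Q v *
      (tilt r0 (W01 g) ph0 (\<lambda>k. (x!k, u!k)) 0 i * tilt r1 (W12 g) ph1 (\<lambda>k. (x!k, u!k, v!(k-i+s))) i d) *
      tilt r0 (W01 g) ph0 (\<lambda>k. (x!k, v!(k-i+s))) d (i + e)) =
   (\<Sum>x\<in>paths d. \<Sum>u\<in>paths d. \<Sum>v\<in>paths (s + (d - i)). pl \<pi>P P x * pl \<pi>Q Q u * pl \<pi>Q Q v *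
      (tilt r0 (W01 g) ph0 (\<lambda>k. (x!k, u!k)) 0 i * tilt r1 (W12 g) ph1 (\<lambda>k. (x!k, u!k, v!(k-i+s))) i d))"
proof -
  have "(\<Sum>x\<in>paths (lnn True d (i+e-d)). \<Sum>u\<in>paths (lnn False d (i+e-d)). \<Sum>v\<in>paths (lnn True (s + (d - i)) (i+e-d)).
            pl \<pi>P P x * pl \<pi>Q Q u * pl \<pi>Q Q v *
            (\<lambda>x u v. tilt r0 (W01 g) ph0 (\<lambda>k. (x!k, u!k)) 0 i * tilt r1 (W12 g) ph1 (\<lambda>k. (x!k, u!k, v!(k-i+s))) i d) x u v
            * tilt r0 (W01 g) ph0 ((\<lambda>x u v k. (x!k, v!(k-i+s))) x u v) d (d + (i+e-d)))
       = (\<Sum>x\<in>paths d. \<Sum>u\<in>paths d. \<Sum>v\<in>paths (s + (d - i)). pl \<pi>P P x * pl \<pi>Q Q u * pl \<pi>Q Q v *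
            (\<lambda>x u v. tilt r0 (W01 g) ph0 (\<lambda>k. (x!k, u!k)) 0 i * tilt r1 (W12 g) ph1 (\<lambda>k. (x!k, u!k, v!(k-i+s))) i d) x u v)"
  proof (rule tilt_gen2)
    fix n and x y z :: "'e list" and p q r :: 'e
    assume a: "x\<in>paths (lnn True d n)" "y\<in>paths (lnn False d n)" "z\<in>paths (lnn True (s + (d - i)) n)"
    have "tilt r0 (W01 g) ph0 (\<lambda>k. (adv True x p ! k, adv False y q ! k)) 0 i = tilt r0 (W01 g) ph0 (\<lambda>k. (x!k, y!k)) 0 i"
      using a assms by (intro tilt_cong) (auto simp: adv_def nth_append paths_def lnn_def)
    moreover have "tilt r1 (W12 g) ph1 (\<lambda>k. (adv True x p ! k, adv False y q ! k, adv True z r ! (k - i + s))) i d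
        = tilt r1 (W12 g) ph1 (\<lambda>k. (x!k, y!k, z ! (k - i + s))) i d"
      using a assms by (intro tilt_cong) (auto simp: adv_def nth_append paths_def lnn_def)
    ultimately show "tilt r0 (W01 g) ph0 (\<lambda>k. (adv True x p ! k, adv False y q ! k)) 0 i *
        tilt r1 (W12 g) ph1 (\<lambda>k. (adv True x p ! k, adv False y q ! k, adv True z r ! (k - i + s))) i d =
       tilt r0 (W01 g) ph0 (\<lambda>k. (x!k, y!k)) 0 i * tilt r1 (W12 g) ph1 (\<lambda>k. (x!k, y!k, z ! (k - i + s))) i d"
      by simp
  next
    show "\<And>a. 0 < r0 a" by (rule r0pos)
  next
    fix n k and x y z :: "'e list" and p q r :: 'e
    assume "x\<in>paths (lnn True d n)" "y\<in>paths (lnn False d n)" "z\<in>paths (lnn True (s + (d - i)) n)" "d \<le> k" "k \<le> d + n"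
    thus "(adv True x p ! k, adv True z r ! (k - i + s)) = (x ! k, z ! (k - i + s))"
      using assms by (auto simp add: adv_def nth_append paths_def lnn_def)
  next
    fix n and x y z :: "'e list"
    assume a: "x\<in>paths (lnn True d n)" "y\<in>paths (lnn False d n)" "z\<in>paths (lnn True (s + (d - i)) n)"
    have i1: "d + n - i + s = s + (d - i) + n" and i2: "Suc (d + n) - i + s = Suc (s + (d - i) + n)" using assms by auto
    have lx: "length x = Suc (d + n)" and lz: "length z = Suc (s + (d - i) + n)" using a by (auto simp: paths_def lnn_def)
    show "(\<Sum>p\<in>UU True. \<Sum>q\<in>UU False. \<Sum>r\<in>UU True. kk True P x p * kk False Q y q * kk True Q z r *
        (exp (W01 g (x ! (d + n), z ! (d + n - i + s)) (adv True x p ! Suc (d + n), adv True z r ! (Suc (d + n) - i + s))) *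
         r0 (adv True x p ! Suc (d + n), adv True z r ! (Suc (d + n) - i + s)) /
        (r0 (x ! (d + n), z ! (d + n - i + s)) * ph0))) = 1"
      unfolding i1 i2 by (rule hsum_xz[OF lx lz])
  qed
  moreover have "lnn True d (i+e-d) = i+e" "lnn True (s+(d-i)) (i+e-d) = s+e" "d + (i+e-d) = i+e"
    "lnn False d (i+e-d) = d" using assms by (auto simp: lnn_def)
  ultimately show ?thesis by simp
qed


lemma main:
  assumes "i \<le> d" "d \<le> i + e" "i + e \<le> nx"
  shows "(\<Sum>x\<in>paths nx. \<Sum>u\<in>paths d. \<Sum>v\<in>paths (s + e). pl \<pi>P P x * pl \<pi>Q Q u * pl \<pi>Q Q v *
      (tilt r0 (W01 g) ph0 (\<lambda>k. (x!k, u!k)) 0 i * tilt r1 (W12 g) ph1 (\<lambda>k. (x!k, u!k, v!(k-i+s))) i d *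
      tilt r0 (W01 g) ph0 (\<lambda>k. (x!k, v!(k-i+s))) d (i + e))) = 1"
proof -
  have "(\<Sum>x\<in>paths nx. \<Sum>u\<in>paths d. \<Sum>v\<in>paths (s + e). pl \<pi>P P x * pl \<pi>Q Q u * pl \<pi>Q Q v *
      (tilt r0 (W01 g) ph0 (\<lambda>k. (x!k, u!k)) 0 i * tilt r1 (W12 g) ph1 (\<lambda>k. (x!k, u!k, v!(k-i+s))) i d *
      tilt r0 (W01 g) ph0 (\<lambda>k. (x!k, v!(k-i+s))) d (i + e))) =
      (\<Sum>x\<in>paths (i + e). \<Sum>u\<in>paths d. \<Sum>v\<in>paths (s + e). pl \<pi>P P x * pl \<pi>Q Q u * pl \<pi>Q Q v *
      (tilt r0 (W01 g) ph0 (\<lambda>k. (x!k, u!k)) 0 i * tilt r1 (W12 g) ph1 (\<lambda>k. (x!k, u!k, v!(k-i+s))) i d *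
      tilt r0 (W01 g) ph0 (\<lambda>k. (x!k, v!(k-i+s))) d (i + e)))"
  proof (rule step1[where G="\<lambda>x u v. tilt r0 (W01 g) ph0 (\<lambda>k. (x!k, u!k)) 0 i * tilt r1 (W12 g) ph1 (\<lambda>k. (x!k, u!k, v!(k-i+s))) i d *
      tilt r0 (W01 g) ph0 (\<lambda>k. (x!k, v!(k-i+s))) d (i + e)"])
    show "i + e \<le> nx" by (rule assms(3))
  next
    fix x x' u v :: "'e list" assume h: "\<And>k. k \<le> i + e \<Longrightarrow> x ! k = x' ! k"
    have "tilt r0 (W01 g) ph0 (\<lambda>k. (x!k, u!k)) 0 i = tilt r0 (W01 g) ph0 (\<lambda>k. (x'!k, u!k)) 0 i"
      by (rule tilt_cong) (use h assms in auto)
    moreover have "tilt r1 (W12 g) ph1 (\<lambda>k. (x!k, u!k, v!(k-i+s))) i d = tilt r1 (W12 g) ph1 (\<lambda>k. (x'!k, u!k, v!(k-i+s))) i d"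
      by (rule tilt_cong) (use h assms in auto)
    moreover have "tilt r0 (W01 g) ph0 (\<lambda>k. (x!k, v!(k-i+s))) d (i + e) = tilt r0 (W01 g) ph0 (\<lambda>k. (x'!k, v!(k-i+s))) d (i + e)"
      by (rule tilt_cong) (use h assms in auto)
    ultimately show "tilt r0 (W01 g) ph0 (\<lambda>k. (x!k, u!k)) 0 i * tilt r1 (W12 g) ph1 (\<lambda>k. (x!k, u!k, v!(k-i+s))) i d *
      tilt r0 (W01 g) ph0 (\<lambda>k. (x!k, v!(k-i+s))) d (i + e) =
      tilt r0 (W01 g) ph0 (\<lambda>k. (x'!k, u!k)) 0 i * tilt r1 (W12 g) ph1 (\<lambda>k. (x'!k, u!k, v!(k-i+s))) i d *
      tilt r0 (W01 g) ph0 (\<lambda>k. (x'!k, v!(k-i+s))) d (i + e)" by simp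
  qed
  also have "\<dots> = (\<Sum>x\<in>paths (i + e). \<Sum>u\<in>paths d. \<Sum>v\<in>paths (s + e). pl \<pi>P P x * pl \<pi>Q Q u * pl \<pi>Q Q v *
      (tilt r0 (W01 g) ph0 (\<lambda>k. (x!k, u!k)) 0 i * tilt r1 (W12 g) ph1 (\<lambda>k. (x!k, u!k, v!(k-i+s))) i d) *
      tilt r0 (W01 g) ph0 (\<lambda>k. (x!k, v!(k-i+s))) d (i + e))"
    by (simp only: mult.assoc)
  also have "\<dots> = (\<Sum>x\<in>paths d. \<Sum>u\<in>paths d. \<Sum>v\<in>paths (s + (d - i)). pl \<pi>P P x * pl \<pi>Q Q u * pl \<pi>Q Q v *
      (tilt r0 (W01 g) ph0 (\<lambda>k. (x!k, u!k)) 0 i * tilt r1 (W12 g) ph1 (\<lambda>k. (x!k, u!k, v!(k-i+s))) i d))"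
    by (rule step2) (use assms in auto)
  also have "\<dots> = (\<Sum>x\<in>paths d. \<Sum>u\<in>paths d. \<Sum>v\<in>paths (s + (d - i)). pl \<pi>P P x * pl \<pi>Q Q u * pl \<pi>Q Q v *
      tilt r0 (W01 g) ph0 (\<lambda>k. (x!k, u!k)) 0 i * tilt r1 (W12 g) ph1 (\<lambda>k. (x!k, u!k, v!(k-i+s))) i d)"
    by (simp only: mult.assoc)
  also have "\<dots> = (\<Sum>x\<in>paths i. \<Sum>u\<in>paths i. \<Sum>v\<in>paths s. pl \<pi>P P x * pl \<pi>Q Q u * pl \<pi>Q Q v *
      tilt r0 (W01 g) ph0 (\<lambda>k. (x!k, u!k)) 0 i)"
    by (rule step3) (use assms in auto)
  also have "\<dots> = (\<Sum>x\<in>paths i. \<Sum>u\<in>paths i. \<Sum>v\<in>paths 0. pl \<pi>P P x * pl \<pi>Q Q u * pl \<pi>Q Q v *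
      tilt r0 (W01 g) ph0 (\<lambda>k. (x!k, u!k)) 0 i)"
    by (rule step4)
  also have "\<dots> = 1" by (rule step5)
  finally show ?thesis .
qed

lemma part1:
  assumes "i \<le> d" "d - i \<le> e"
  shows "E3 \<pi>P P \<pi>Q Q (i + e) (Lg P Q g r0 r1 i d e) = 1"
proof -
  have de: "d \<le> i + e" using assms by simp
  let ?F1 = "\<lambda>x u. tilt r0 (W01 g) ph0 (\<lambda>k. (x!k, u!k)) 0 i"
  let ?F2 = "\<lambda>x u v. tilt r1 (W12 g) ph1 (\<lambda>k. (x!k, u!k, v!k)) i d"
  let ?F3 = "\<lambda>x v. tilt r0 (W01 g) ph0 (\<lambda>k. (x!k, v!k)) d (i + e)"
  have "E3 \<pi>P P \<pi>Q Q (i + e) (Lg P Q g r0 r1 i d e) =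
     (\<Sum>x\<in>paths (i + e). \<Sum>u\<in>paths (i + e). \<Sum>v\<in>paths (i + e). pl \<pi>P P x * pl \<pi>Q Q u * pl \<pi>Q Q v *
       (?F1 x u * ?F2 x u v * ?F3 x v))"
    unfolding E3_def by (intro sum.cong refl) (simp add: pl_paths Lg_eq)
  also have "\<dots> = (\<Sum>x\<in>paths (i + e). \<Sum>u\<in>paths d. \<Sum>v\<in>paths (i + e). pl \<pi>P P x * pl \<pi>Q Q u * pl \<pi>Q Q v *
       (?F1 x u * ?F2 x u v * ?F3 x v))"
  proof (rule step_y[where G="\<lambda>x u v. ?F1 x u * ?F2 x u v * ?F3 x v"])
    show "d \<le> i + e" by (rule de)
  next
    fix x u u' v :: "'e list" assume h: "\<And>k. k \<le> d \<Longrightarrow> u ! k = u' ! k"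
    have "?F1 x u = ?F1 x u'" by (rule tilt_cong) (use h assms in auto)
    moreover have "?F2 x u v = ?F2 x u' v" by (rule tilt_cong) (use h assms in auto)
    ultimately show "?F1 x u * ?F2 x u v * ?F3 x v = ?F1 x u' * ?F2 x u' v * ?F3 x v" by simp
  qed
  also have "\<dots> = (\<Sum>x\<in>paths (i + e). \<Sum>u\<in>paths d. \<Sum>v\<in>paths (i + e). pl \<pi>P P x * pl \<pi>Q Q u * pl \<pi>Q Q v *
      (tilt r0 (W01 g) ph0 (\<lambda>k. (x!k, u!k)) 0 i * tilt r1 (W12 g) ph1 (\<lambda>k. (x!k, u!k, v!(k-i+i))) i d *
      tilt r0 (W01 g) ph0 (\<lambda>k. (x!k, v!(k-i+i))) d (i + e)))"
  proof (intro sum.cong refl)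
    fix x u v :: "'e list"
    have "?F2 x u v = tilt r1 (W12 g) ph1 (\<lambda>k. (x!k, u!k, v!(k-i+i))) i d"
      by (rule tilt_cong) (use assms in auto)
    moreover have "?F3 x v = tilt r0 (W01 g) ph0 (\<lambda>k. (x!k, v!(k-i+i))) d (i + e)"
      by (rule tilt_cong) (use assms de in auto)
    ultimately show "pl \<pi>P P x * pl \<pi>Q Q u * pl \<pi>Q Q v * (?F1 x u * ?F2 x u v * ?F3 x v) =
      pl \<pi>P P x * pl \<pi>Q Q u * pl \<pi>Q Q v *
      (tilt r0 (W01 g) ph0 (\<lambda>k. (x!k, u!k)) 0 i * tilt r1 (W12 g) ph1 (\<lambda>k. (x!k, u!k, v!(k-i+i))) i d *
      tilt r0 (W01 g) ph0 (\<lambda>k. (x!k, v!(k-i+i))) d (i + e))" by simp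
  qed
  also have "\<dots> = 1" by (rule main) (use assms de in auto)
  finally show ?thesis .
qed

lemma Qle1: "Q a b \<le> 1"
proof -
  have "Q a b \<le> (\<Sum>b\<in>UNIV. Q a b)" by (rule member_le_sum) (auto intro: Qnn)
  thus ?thesis using Qsum by simp
qed

lemma part2:
  assumes "i \<le> d" "d - i \<le> e" "1 \<le> T" "d + 1 \<le> i + T"
    and pP: "\<And>a. \<pi>P a \<ge> 0" and cpos: "c > 0" and pQ: "\<And>b. \<pi>Q b \<ge> c"
  shows "E2 \<pi>P P \<pi>Q Q (i + e + T) (\<lambda>x y. Lg P Q g r0 r1 i d e x y (\<lambda>n. y (n + T))) \<le> 1 / c"
proof -
  define s where "s = i + T - (d + 1)"
  have de: "d \<le> i + e" using assms by simp
  have N: "i + e + T = d + Suc (s + e)" using assms by (simp add: s_def)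
  have pQ0: "\<pi>Q b \<ge> 0" for b using pQ[of b] cpos by simp
  let ?F = "\<lambda>x u v. tilt r0 (W01 g) ph0 (\<lambda>k. (x!k, u!k)) 0 i * tilt r1 (W12 g) ph1 (\<lambda>k. (x!k, u!k, v!(k-i+s))) i d *
      tilt r0 (W01 g) ph0 (\<lambda>k. (x!k, v!(k-i+s))) d (i + e)"
  have Fnn: "?F x u v \<ge> 0" for x u v
    using r0pos r1pos ph0pos ph1pos by (intro mult_nonneg_nonneg tilt_nonneg) auto
  have "E2 \<pi>P P \<pi>Q Q (i + e + T) (\<lambda>x y. Lg P Q g r0 r1 i d e x y (\<lambda>n. y (n + T))) =
     (\<Sum>x\<in>paths (i + e + T). \<Sum>y\<in>paths (d + Suc (s + e)). pl \<pi>P P x * pl \<pi>Q Q y *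
        Lg P Q g r0 r1 i d e ((!) x) ((!) y) (\<lambda>n. y ! (n + T)))"
    unfolding E2_def N by (intro sum.cong refl) (simp add: pl_paths)
  also have "\<dots> = (\<Sum>x\<in>paths (i + e + T). \<Sum>u\<in>paths d. \<Sum>v\<in>paths (s + e). pl \<pi>P P x * pl \<pi>Q Q (u @ v) *
        Lg P Q g r0 r1 i d e ((!) x) ((!) (u @ v)) (\<lambda>n. (u @ v) ! (n + T)))"
    by (simp only: paths_append_sum)
  also have "\<dots> = (\<Sum>x\<in>paths (i + e + T). \<Sum>u\<in>paths d. \<Sum>v\<in>paths (s + e). pl \<pi>P P x * pl \<pi>Q Q (u @ v) * ?F x u v)"
  proof (intro sum.cong refl)
    fix x u v :: "'e list" assume u: "u \<in> paths d"
    hence lu: "length u = Suc d" by (simp add: paths_def)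
    have "tilt r0 (W01 g) ph0 (\<lambda>k. (x!k, (u @ v)!k)) 0 i = tilt r0 (W01 g) ph0 (\<lambda>k. (x!k, u!k)) 0 i"
      by (rule tilt_cong) (use lu assms in \<open>auto simp: nth_append\<close>)
    moreover have "tilt r1 (W12 g) ph1 (\<lambda>k. (x!k, (u @ v)!k, (u @ v) ! (k + T))) i d =
        tilt r1 (W12 g) ph1 (\<lambda>k. (x!k, u!k, v!(k-i+s))) i d"
      by (rule tilt_cong) (use lu assms in \<open>auto simp: nth_append s_def\<close>)
    moreover have "tilt r0 (W01 g) ph0 (\<lambda>k. (x!k, (u @ v) ! (k + T))) d (i + e) =
        tilt r0 (W01 g) ph0 (\<lambda>k. (x!k, v!(k-i+s))) d (i + e)"
      by (rule tilt_cong) (use lu assms de in \<open>auto simp: nth_append s_def\<close>)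
    ultimately show "pl \<pi>P P x * pl \<pi>Q Q (u @ v) * Lg P Q g r0 r1 i d e ((!) x) ((!) (u @ v)) (\<lambda>n. (u @ v) ! (n + T)) =
        pl \<pi>P P x * pl \<pi>Q Q (u @ v) * ?F x u v"
      by (simp add: Lg_eq)
  qed
  also have "\<dots> \<le> (\<Sum>x\<in>paths (i + e + T). \<Sum>u\<in>paths d. \<Sum>v\<in>paths (s + e). pl \<pi>P P x * (pl \<pi>Q Q u * pl \<pi>Q Q v / c) * ?F x u v)"
  proof (intro sum_mono mult_right_mono mult_left_mono Fnn pl_nonneg pP Pnn)
    fix u v :: "'e list" assume u: "u \<in> paths d" and v: "v \<in> paths (s + e)"
    have ne: "u \<noteq> []" "v \<noteq> []" using u v by (auto simp: paths_def)
    have "pl \<pi>Q Q (u @ v) * c \<le> pl \<pi>Q Q (u @ v) * \<pi>Q (hd v)"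
      by (intro mult_left_mono pQ pl_nonneg pQ0 Qnn)
    also have "\<dots> \<le> pl \<pi>Q Q u * pl \<pi>Q Q v"
      by (rule pl_append_le) (use ne pQ0 Qnn Qle1 in auto)
    finally show "pl \<pi>Q Q (u @ v) \<le> pl \<pi>Q Q u * pl \<pi>Q Q v / c"
      using cpos by (simp add: pos_le_divide_eq)
  qed
  also have "\<dots> = (1 / c) * (\<Sum>x\<in>paths (i + e + T). \<Sum>u\<in>paths d. \<Sum>v\<in>paths (s + e). pl \<pi>P P x * pl \<pi>Q Q u * pl \<pi>Q Q v * ?F x u v)"
    by (simp add: sum_distrib_left mult.assoc)
  also have "\<dots> = 1 / c" using main[of i d e "i + e + T" s] assms de by simp
  finally show ?thesis .
qed
end


lemma mpow_nonneg: "stochastic M \<Longrightarrow> mpow M n a b \<ge> 0"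
proof (induction n arbitrary: b)
  case 0 thus ?case by simp
next
  case (Suc n) thus ?case by (auto simp: stochastic_def intro!: sum_nonneg mult_nonneg_nonneg)
qed

lemma stat_mpow:
  assumes "stationary_dist \<pi> M"
  shows "(\<Sum>a\<in>UNIV. \<pi> a * mpow M n a b) = \<pi> b"
proof (induction n arbitrary: b)
  case 0
  have "(\<Sum>a\<in>UNIV. \<pi> a * (if a = b then 1 else 0)) = (\<Sum>a\<in>UNIV. if a = b then \<pi> a else 0)"
    by (rule sum.cong) auto
  also have "\<dots> = \<pi> b" by simp
  finally have "(\<Sum>a\<in>UNIV. \<pi> a * (if a = b then 1 else 0)) = \<pi> b" .
  thus ?case by simp
next
  case (Suc n)
  have "(\<Sum>a\<in>UNIV. \<pi> a * mpow M (Suc n) a b) = (\<Sum>a\<in>UNIV. \<Sum>c\<in>UNIV. \<pi> a * mpow M n a c * M c b)"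
    by (simp add: sum_distrib_left mult.assoc)
  also have "\<dots> = (\<Sum>c\<in>UNIV. (\<Sum>a\<in>UNIV. \<pi> a * mpow M n a c) * M c b)"
    by (subst sum.swap) (simp add: sum_distrib_right)
  also have "\<dots> = (\<Sum>c\<in>UNIV. \<pi> c * M c b)" by (simp add: Suc.IH)
  also have "\<dots> = \<pi> b" using assms by (simp add: stationary_dist_def)
  finally show ?case .
qed

lemma stat_pos:
  assumes "stationary_dist \<pi> M" "irreducible_mat M" "stochastic M"
  shows "\<pi> b > 0"
proof -
  have nn: "\<pi> a \<ge> 0" for a using assms(1) by (simp add: stationary_dist_def)
  obtain a0 where a0: "\<pi> a0 > 0"
  proof (rule ccontr)
    assume "\<not> thesis"
    hence "\<pi> a = 0" for a using nn[of a] that[of a] by linarith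
    thus False using assms(1) by (simp add: stationary_dist_def)
  qed
  obtain n where "mpow M n a0 b > 0" using assms(2) by (auto simp: irreducible_mat_def)
  hence "\<pi> a0 * mpow M n a0 b > 0" using a0 by simp
  also have "\<pi> a0 * mpow M n a0 b \<le> (\<Sum>a\<in>UNIV. \<pi> a * mpow M n a b)"
    by (rule member_le_sum[of a0 UNIV "\<lambda>a. \<pi> a * mpow M n a b"]) (auto intro: mult_nonneg_nonneg nn mpow_nonneg assms(3))
  also have "\<dots> = \<pi> b" by (rule stat_mpow[OF assms(1)])
  finally show ?thesis .
qed

theorem lemma5p2:
  fixes P Q :: "'e::finite \<Rightarrow> 'e \<Rightarrow> real"
    and \<pi>P \<pi>Q :: "'e \<Rightarrow> real"
    and g :: "'e pot"
    and r0 :: "'e \<times> 'e \<Rightarrow> real"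
    and r1 :: "'e \<times> 'e \<times> 'e \<Rightarrow> real"
  assumes "stochastic P" "irreducible_mat P" "aperiodic_mat P"
    and "stochastic Q" "irreducible_mat Q" "aperiodic_mat Q"
    and "stationary_dist \<pi>P P" "stationary_dist \<pi>Q Q"
    and "pos_right_eigvec (Phi0 P Q g) r0"
    and "pos_right_eigvec (Phi1 P Q g) r1"
  shows "(\<forall>i \<delta>1 \<delta>2. i \<le> \<delta>1 \<and> \<delta>1 - i \<le> \<delta>2 \<longrightarrow>
            E3 \<pi>P P \<pi>Q Q (i + \<delta>2) (Lg P Q g r0 r1 i \<delta>1 \<delta>2) = 1)
       \<and> (\<exists>\<rho>>0. \<forall>i \<delta>1 \<delta>2 T. i \<le> \<delta>1 \<and> \<delta>1 - i \<le> \<delta>2 \<and> T \<ge> 1 \<and> i + T \<ge> \<delta>1 + 1 \<longrightarrow>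
            E2 \<pi>P P \<pi>Q Q (i + \<delta>2 + T)
               (\<lambda>x y. Lg P Q g r0 r1 i \<delta>1 \<delta>2 x y (\<lambda>n. y (n + T))) \<le> \<rho>)"
proof -
  have piP: "sum \<pi>P UNIV = 1" and piQ: "sum \<pi>Q UNIV = 1" and pP: "\<And>a. \<pi>P a \<ge> 0"
    using assms(7,8) by (auto simp: stationary_dist_def)
  note ctx = assms(1,4) piP piQ assms(9,10)
  define c where "c = Min (range \<pi>Q)"
  have cpos: "c > 0" unfolding c_def
    using stat_pos[OF assms(8,5,4)] by (subst Min_gr_iff) auto
  have cle: "\<pi>Q b \<ge> c" for b unfolding c_def by (rule Min_le) auto
  show ?thesis
  proof (intro conjI allI impI)
    fix i \<delta>1 \<delta>2 :: nat assume "i \<le> \<delta>1 \<and> \<delta>1 - i \<le> \<delta>2"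
    thus "E3 \<pi>P P \<pi>Q Q (i + \<delta>2) (Lg P Q g r0 r1 i \<delta>1 \<delta>2) = 1"
      using part1[OF ctx] by blast
  next
    show "\<exists>\<rho>>0. \<forall>i \<delta>1 \<delta>2 T. i \<le> \<delta>1 \<and> \<delta>1 - i \<le> \<delta>2 \<and> T \<ge> 1 \<and> i + T \<ge> \<delta>1 + 1 \<longrightarrow>
            E2 \<pi>P P \<pi>Q Q (i + \<delta>2 + T)
               (\<lambda>x y. Lg P Q g r0 r1 i \<delta>1 \<delta>2 x y (\<lambda>n. y (n + T))) \<le> \<rho>"
      using part2[OF ctx _ _ _ _ pP cpos cle] cpos by (intro exI[of _ "1 / c"]) auto
  qed
qed

end
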